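(* Let $N_S>0$, $M\ge 1$, $m\ge 1$ be integers/reals as indicated, and $0\le\kappa_T\le 1$. Consider the following entanglement-assisted discrimination task with equal prior probabilities. Source: for each of $m$ frequency slots $\ell=1,\dots,m$ and each of $M$ repetitions, prepare an independent signal–idler mode pair in the two-mode squeezed vacuum state $|\phi\rangle=\sum_{n=0}^\infty\sqrt{\frac{N_S^n}{(N_S+1)^{n+1}}}\,|n\rangle_S|n\rangle_I$. The idlers are kept noiselessly and losslessly. Hypotheses: if $m=1$ there are two hypotheses, under which every signal mode passes through a pure-loss channel $a\mapsto\sqrt{\kappa}\,a+\sqrt{1-\kappa}\,v$ ($v$ a vacuum mode) with $\kappa=\kappa_T$ (hypothesis "target") or $\kappa=\kappa_B=1$ (hypothesis "background"). If $m\ge 2$ there are $m$ hypotheses $h=1,\dots,m$; under hypothesis $h$ every signal mode of slot $h$ passes through the pure-loss channel of transmissivity $\kappa_T$ and every signal mode of every other slot passes through the identity channel (transmissivity $\kappa_B=1$); no thermal noise is added. Receiver: on each returned signal–idler pair $(a_S'',a_I'')$ apply a two-mode squeezing transformation of gain $G=1+N_S$, $a_S=\sqrt{G}\,a_S''-\sqrt{G-1}\,a_I''^{\dagger}$, $a_I=\sqrt{G}\,a_I''-\sqrt{G-1}\,a_S''^{\dagger}$; then perform photon counting on all $2mM$ output modes and decide by the maximum-likelihood rule, breaking ties uniformly at random. Then the error probability of this scheme is $$P_{E,m}=R_m\left[\frac{1}{1+N_S(1-\sqrt{\kappa_T})}\right]^{2M},$$ where $R_1=1/2$ and $R_m=(m-1)/m$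 for $m\ge 2$.
   Context: Modes are bosonic; $|n\rangle$ denotes the Fock (number) state. A pure-loss channel of transmissivity $\kappa$ acts on an annihilation operator $a$ as $a\mapsto\sqrt{\kappa}\,a+\sqrt{1-\kappa}\,v$ with $v$ in the vacuum state. Error probability is the average probability, under equal priors over the hypotheses, that the decision differs from the true hypothesis. *)

theory Defs
  imports "HOL-Analysis.Analysis"
begin

(* All quantum states are represented by their (real) amplitudes in the Fock
   (photon-number) basis. *)

definition tmsv_amp :: "real \<Rightarrow> nat \<Rightarrow> real" where
  "tmsv_amp NS n = sqrt (NS ^ n / (NS + 1) ^ (n + 1))"

text \<open>Pure-loss channel of transmissivity kappa, via its Stinespring dilation
  (beam splitter a -> sqrt kappa a + sqrt(1-kappa) v with vacuum v):
  amplitude of |k>_S |e>_E in the image of |n>_S |0>_v.\<close>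
definition loss_amp :: "real \<Rightarrow> nat \<Rightarrow> nat \<Rightarrow> nat \<Rightarrow> real" where
  "loss_amp \<kappa> n k e =
     (if k + e = n then sqrt (real (n choose k)) * sqrt \<kappa> ^ k * sqrt (1 - \<kappa>) ^ e else 0)"

text \<open>Fock matrix element <p,q| S |k,n> of the two-mode squeezing unitary
  S = exp(r (a b - a^+ b^+)), cosh r = sqrt G, sinh r = sqrt (G-1),
  i.e. S^+ a S = sqrt G a - sqrt(G-1) b^+, S^+ b S = sqrt G b - sqrt(G-1) a^+,
  written through the normal-ordered (disentangled) form
  S = exp(-t a^+ b^+) (cosh r)^(-(N_a+N_b+1)) exp(t a b), t = tanh r.\<close>
definition tms_elem :: "real \<Rightarrow> nat \<Rightarrow> nat \<Rightarrow> nat \<Rightarrow> nat \<Rightarrow> real" where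
  "tms_elem G p q k n =
     (let c = sqrt G; t = sqrt (G - 1) / sqrt G in
      (\<Sum>j\<le>min k n.
         if k \<le> p + j \<and> n \<le> q + j \<and> p + j - k = q + j - n then
           (let i = p + j - k in
              (- t) ^ i / fact i * t ^ j / fact j
              * sqrt (fact k / fact (k - j) * fact n / fact (n - j))
              * sqrt (fact (k - j + i) / fact (k - j) * fact (n - j + i) / fact (n - j))
              / c ^ (k + n - 2 * j + 1))
         else 0))"

text \<open>Amplitude of |p>_S |q>_I |e>_E after: TMSV source, pure loss kappa on the
  signal (environment E), then two-mode squeezing of gain G = 1 + N_S on (S,I).\<close>
definition out_amp :: "real \<Rightarrow> real \<Rightarrow> nat \<Rightarrow> nat \<Rightarrow> nat \<Rightarrow> real" where
  "out_amp NS \<kappa> p q e =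
     (\<Sum>\<^sub>\<infinity>(k, n)\<in>UNIV. tms_elem (1 + NS) p q k n * tmsv_amp NS n * loss_amp \<kappa> n k e)"

definition pair_prob :: "real \<Rightarrow> real \<Rightarrow> nat \<times> nat \<Rightarrow> real" where
  "pair_prob NS \<kappa> pq = (\<Sum>\<^sub>\<infinity>e\<in>UNIV. (out_amp NS \<kappa> (fst pq) (snd pq) e)\<^sup>2)"

definition num_hyp :: "nat \<Rightarrow> nat" where
  "num_hyp m = (if m = 1 then 2 else m)"

text \<open>Transmissivity of slot l (0-based) under hypothesis h (0-based):
  kappa_T on the slot equal to h, kappa_B = 1 elsewhere.  For m = 1, h = 0 is
  "target" and h = 1 is "background".\<close>
definition kap :: "real \<Rightarrow> nat \<Rightarrow> nat \<Rightarrow> real" where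
  "kap \<kappa>T h l = (if l = h then \<kappa>T else 1)"

definition outcomes :: "nat \<Rightarrow> nat \<Rightarrow> (nat \<Rightarrow> nat \<Rightarrow> nat \<times> nat) set" where
  "outcomes m M = {w. \<forall>l r. (m \<le> l \<or> M \<le> r) \<longrightarrow> w l r = (0, 0)}"

definition hyp_prob :: "real \<Rightarrow> real \<Rightarrow> nat \<Rightarrow> nat \<Rightarrow> nat \<Rightarrow> (nat \<Rightarrow> nat \<Rightarrow> nat \<times> nat) \<Rightarrow> real" where
  "hyp_prob NS \<kappa>T m M h w = (\<Prod>l<m. \<Prod>r<M. pair_prob NS (kap \<kappa>T h l) (w l r))"

definition ml_set :: "real \<Rightarrow> real \<Rightarrow> nat \<Rightarrow> nat \<Rightarrow> (nat \<Rightarrow> nat \<Rightarrow> nat \<times> nat) \<Rightarrow> nat set" where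
  "ml_set NS \<kappa>T m M w =
     {h. h < num_hyp m \<and> (\<forall>h'<num_hyp m. hyp_prob NS \<kappa>T m M h' w \<le> hyp_prob NS \<kappa>T m M h w)}"

definition decide_prob :: "real \<Rightarrow> real \<Rightarrow> nat \<Rightarrow> nat \<Rightarrow> (nat \<Rightarrow> nat \<Rightarrow> nat \<times> nat) \<Rightarrow> nat \<Rightarrow> real" where
  "decide_prob NS \<kappa>T m M w h =
     (if h \<in> ml_set NS \<kappa>T m M w then 1 / real (card (ml_set NS \<kappa>T m M w)) else 0)"

definition error_prob :: "real \<Rightarrow> real \<Rightarrow> nat \<Rightarrow> nat \<Rightarrow> real" where
  "error_prob NS \<kappa>T m M =
     (\<Sum>h<num_hyp m. (1 / real (num_hyp m)) *
        (\<Sum>\<^sub>\<infinity>w\<in>outcomes m M.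
           hyp_prob NS \<kappa>T m M h w * (1 - decide_prob NS \<kappa>T m M w h)))"

end

theory Submission
  imports Defs
begin


lemma tmsv_eq:
  assumes "NS > 0"
  shows "tmsv_amp NS n = (sqrt NS / sqrt (1 + NS)) ^ n / sqrt (1 + NS)"
  using assms by (simp add: tmsv_amp_def real_sqrt_divide real_sqrt_power power_divide add.commute real_sqrt_mult)

lemma loss1: "loss_amp 1 n k e = (if k = n \<and> e = 0 then 1 else 0)"
  by (cases e) (auto simp: loss_amp_def)

lemma loss_diag: "loss_amp \<kappa> n n e = (if e = 0 then sqrt \<kappa> ^ n else 0)"
  by (auto simp: loss_amp_def)

lemma loss_offdiag: "k \<noteq> n \<Longrightarrow> loss_amp \<kappa> n k 0 = 0"
  by (auto simp: loss_amp_def)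

lemma tms00:
  "tms_elem G 0 0 k n = (if k = n then (sqrt (G - 1) / sqrt G) ^ n / sqrt G else 0)"
proof -
  have "tms_elem G 0 0 k n = (\<Sum>j\<le>min k n. if j = n \<and> k = n then (sqrt (G - 1) / sqrt G) ^ n / sqrt G else 0)"
    unfolding tms_elem_def Let_def
    by (rule sum.cong) (auto simp: real_sqrt_mult_self)
  also have "\<dots> = (if k = n then (sqrt (G - 1) / sqrt G) ^ n / sqrt G else 0)"
    by (cases "k = n") auto
  finally show ?thesis .
qed

lemma tms_offdiag: "p \<noteq> q \<Longrightarrow> tms_elem G p q n n = 0"
  unfolding tms_elem_def Let_def
  by (rule sum.neutral) auto

lemma diag_infsum:
  fixes f :: "nat \<times> nat \<Rightarrow> real"
  assumes "\<And>k n. k \<noteq> n \<Longrightarrow> f (k, n) = 0"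
  shows "infsum f UNIV = infsum (\<lambda>n. f (n, n)) UNIV"
proof -
  have "infsum f UNIV = infsum f (range (\<lambda>n. (n, n)))"
    by (rule infsum_cong_neutral) (use assms in auto)
  also have "\<dots> = infsum (f \<circ> (\<lambda>n. (n, n))) UNIV"
    by (rule infsum_reindex) (auto simp: inj_on_def)
  finally show ?thesis by (simp add: o_def)
qed

lemma single_infsum:
  fixes f :: "'a \<Rightarrow> real"
  assumes "\<And>x. x \<in> A \<Longrightarrow> x \<noteq> a \<Longrightarrow> f x = 0" "a \<in> A"
  shows "infsum f A = f a"
proof -
  have "infsum f A = infsum f {a}"
    by (rule infsum_cong_neutral) (use assms in auto)
  then show ?thesis by simp
qed



lemma geom_has_sum:
  fixes r a :: real
  assumes "0 \<le> r" "r < 1" "0 \<le> a"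
  shows "((\<lambda>n. a * r ^ n) has_sum (a / (1 - r))) UNIV"
proof -
  have "(\<lambda>n. r ^ n) sums (1 / (1 - r))" by (rule geometric_sums) (use assms in auto)
  then have "(\<lambda>n. a * r ^ n) sums (a * (1 / (1 - r)))" by (rule sums_mult)
  then show ?thesis by (intro sums_nonneg_imp_has_sum) (use assms in auto)
qed

lemma out_amp00:
  assumes "NS > 0" "0 \<le> \<kappa>" "\<kappa> \<le> 1"
  shows "out_amp NS \<kappa> 0 0 e = (if e = 0 then 1 / (1 + NS * (1 - sqrt \<kappa>)) else 0)"
proof -
  define c where "c = sqrt (1 + NS)"
  define t where "t = sqrt NS / sqrt (1 + NS)"
  have c2: "c * c = 1 + NS" using assms by (simp add: c_def)
  have t2: "t * t = NS / (1 + NS)" using assms by (simp add: t_def real_sqrt_divide[symmetric])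
  have tms: "tms_elem (1 + NS) 0 0 k n = (if k = n then t ^ n / c else 0)" for k n
    by (simp add: tms00 t_def c_def)
  have tv: "tmsv_amp NS n = t ^ n / c" for n
    using assms by (simp add: tmsv_eq t_def c_def)
  have "out_amp NS \<kappa> 0 0 e = infsum (\<lambda>n. t ^ n / c * (t ^ n / c) * loss_amp \<kappa> n n e) UNIV"
    unfolding out_amp_def
    by (subst diag_infsum) (auto simp: tms tv)
  also have "\<dots> = (if e = 0 then 1 / (1 + NS * (1 - sqrt \<kappa>)) else 0)"
  proof (cases "e = 0")
    case False
    then show ?thesis by (simp add: loss_diag)
  next
    case True
    define r where "r = NS * sqrt \<kappa> / (1 + NS)"
    have r0: "0 \<le> r" using assms by (simp add: r_def)
    have "sqrt \<kappa> \<le> 1" using assms by simp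
    then have "NS * sqrt \<kappa> \<le> NS" using assms by (simp add: mult_left_le)
    then have "NS * sqrt \<kappa> < 1 + NS" by linarith
    then have r1: "r < 1" using assms by (simp add: r_def field_simps)
    have eq: "t ^ n / c * (t ^ n / c) * loss_amp \<kappa> n n e = (1 / (1 + NS)) * r ^ n" for n
    proof -
      have "t ^ n / c * (t ^ n / c) * loss_amp \<kappa> n n e = (t * t * sqrt \<kappa>) ^ n / (c * c)"
        using True by (simp add: loss_diag power_mult_distrib)
      also have "\<dots> = (1 / (1 + NS)) * r ^ n"
        using assms by (simp add: t2 c2 r_def power_divide)
      finally show ?thesis .
    qed
    have "((\<lambda>n. (1 / (1 + NS)) * r ^ n) has_sum ((1 / (1 + NS)) / (1 - r))) UNIV"
      by (rule geom_has_sum) (use r0 r1 assms in auto)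
    then have "infsum (\<lambda>n. t ^ n / c * (t ^ n / c) * loss_amp \<kappa> n n e) UNIV = (1 / (1 + NS)) / (1 - r)"
      unfolding eq by (rule infsumI)
    also have "\<dots> = 1 / (1 + NS * (1 - sqrt \<kappa>))"
      using assms by (simp add: r_def field_simps)
    finally show ?thesis using True by simp
  qed
  finally show ?thesis .
qed



lemma has_sum_sum_fin:
  fixes f :: "'i \<Rightarrow> 'a \<Rightarrow> real"
  assumes "finite I" "\<And>i. i \<in> I \<Longrightarrow> (f i has_sum s i) A"
  shows "((\<lambda>x. \<Sum>i\<in>I. f i x) has_sum (\<Sum>i\<in>I. s i)) A"
  using assms
proof (induction I rule: finite_induct)
  case empty
  then show ?case by simp
next
  case (insert i I)
  then show ?case by (simp add: has_sum_add)
qed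

lemma negbin:
  fixes x :: real
  assumes "0 \<le> x" "x < 1"
  shows "((\<lambda>n. real (n choose d) * x ^ (n - d)) has_sum (1 / (1 - x)) ^ (d + 1)) UNIV"
proof -
  have "\<bar>-x\<bar> < 1" using assms by simp
  from gen_binomial_real[OF this, of "- (real d + 1)"]
  have s: "(\<lambda>m. ((- (real d + 1)) gchoose m) * (-x) ^ m) sums (1 + - x) powr (- (real d + 1))" .
  have eq1: "((- (real d + 1)) gchoose m) * (-x) ^ m = real ((m + d) choose d) * x ^ m" for m
  proof -
    have "((- (real d + 1)) gchoose m) = (-1) ^ m * (real (d + m) gchoose m)"
      by (subst gbinomial_minus) (simp add: add.commute)
    also have "(real (d + m) gchoose m) = real ((d + m) choose m)"
      by (simp add: binomial_gbinomial)
    also have "(d + m) choose m = (m + d) choose d"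
      by (metis add.commute add_diff_cancel_right' binomial_symmetric le_add2)
    finally show ?thesis by (simp add: power_minus')
  qed
  have eq2: "(1 + - x) powr (- (real d + 1)) = (1 / (1 - x)) ^ (d + 1)"
  proof -
    have p: "(1 - x) powr real (d + 1) = (1 - x) ^ (d + 1)"
      using assms by (intro powr_realpow) simp
    have "(1 + - x) powr (- (real d + 1)) = 1 / (1 - x) powr real (d + 1)"
      using powr_minus_divide[of "1 - x" "real (d + 1)"] by (simp add: add.commute)
    then show ?thesis using p by (simp add: power_one_over)
  qed
  have "(\<lambda>m. real ((m + d) choose d) * x ^ ((m + d) - d)) sums ((1 / (1 - x)) ^ (d + 1))"
    using s unfolding eq1 eq2 by simp
  then have "(\<lambda>n. real (n choose d) * x ^ (n - d)) sums ((1 / (1 - x)) ^ (d + 1) + (\<Sum>i<d. real (i choose d) * x ^ (i - d)))"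
    by (subst (asm) sums_iff_shift[of "\<lambda>n. real (n choose d) * x ^ (n - d)" d])
  also have "(\<Sum>i<d. real (i choose d) * x ^ (i - d)) = 0"
    by (rule sum.neutral) auto
  finally show ?thesis
    by (intro sums_nonneg_imp_has_sum) (use assms in auto)
qed



lemma sqrt_sq_div: "sqrt ((a::real) / b * a / b) = \<bar>a / b\<bar>"
  by (metis real_sqrt_abs2 power2_eq_square times_divide_eq_right divide_divide_eq_left mult.commute times_divide_eq_left)

lemma term_alg:
  fixes c t :: real assumes "c > 0"
  shows "(- t) ^ e / fact e * t ^ j / fact j
     * sqrt (fact (j+d) / fact d * fact (j+d) / fact d)
     * sqrt (fact (d+e) / fact d * fact (d+e) / fact d) / c ^ (2*d+1) * (t^(j+d)/c)
   = (-1)^e * real ((e+d) choose d) * t^(e+d) * ((1/(c*c))^(d+1) * (real ((j+d) choose d) * (t*t)^j))"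
proof -
  have b1: "real ((e+d) choose d) = fact (d+e) / (fact d * fact e)"
    by (subst binomial_fact) (auto simp: add.commute)
  have b2: "real ((j+d) choose d) = fact (j+d) / (fact d * fact j)"
    by (subst binomial_fact) auto
  have cc: "c ^ (2*d+1) = c ^ d * c ^ d * c" by (simp add: power_add mult_2)
  show ?thesis
    unfolding sqrt_sq_div b1 b2 cc using assms
    by (simp add: power_add power_mult_distrib power_minus' field_simps power2_eq_square)
qed



lemma sum_rev_atMost: "(\<Sum>j\<le>(n::nat). h (n - j)) = (\<Sum>d\<le>n. (h d :: real))"
  by (rule sum.reindex_bij_witness[where i="\<lambda>d. n - d" and j="\<lambda>j. n - j"]) auto

lemma tms_diag:
  assumes "NS > 0"
  defines "t \<equiv> sqrt NS / sqrt (1 + NS)" and "c \<equiv> sqrt (1 + NS)"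
  shows "tms_elem (1 + NS) p p n n * tmsv_amp NS n =
    (\<Sum>d\<le>p. (-1)^(p-d) * real (p choose d) * t^p * ((1/(c*c))^(d+1) * (real (n choose d) * (t*t)^(n-d))))"
    (is "_ = (\<Sum>d\<le>p. ?T d)")
proof -
  have c0: "c > 0" using assms by (simp add: c_def)
  have tv: "tmsv_amp NS m = t ^ m / c" for m
    using assms by (simp add: tmsv_eq t_def c_def)
  have step1: "tms_elem (1 + NS) p p n n * tmsv_amp NS n = (\<Sum>j\<le>n. (if n - j \<le> p then ?T (n - j) else 0))"
    unfolding tms_elem_def Let_def sum_distrib_right min.idem
  proof (rule sum.cong)
    fix j assume "j \<in> {..n}"
    then have jn: "j \<le> n" by simp
    show "(if n \<le> p + j \<and> n \<le> p + j \<and> p + j - n = p + j - n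
          then (- (sqrt (1 + NS - 1) / sqrt (1 + NS))) ^ (p + j - n) / fact (p + j - n) *
               (sqrt (1 + NS - 1) / sqrt (1 + NS)) ^ j / fact j *
               sqrt (fact n / fact (n - j) * fact n / fact (n - j)) *
               sqrt (fact (n - j + (p + j - n)) / fact (n - j) * fact (n - j + (p + j - n)) / fact (n - j)) /
               sqrt (1 + NS) ^ (n + n - 2 * j + 1)
          else 0) * tmsv_amp NS n =
         (if n - j \<le> p then ?T (n - j) else 0)"
    proof (cases "n - j \<le> p")
      case False
      then show ?thesis by auto
    next
      case True
      define d where "d = n - j"
      define e where "e = p - d"
      have nd: "n = j + d" using jn by (simp add: d_def)
      have pd: "p = e + d" using True by (simp add: e_def d_def)
      have "(- t) ^ e / fact e * t ^ j / fact j
     * sqrt (fact (j+d) / fact d * fact (j+d) / fact d)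
     * sqrt (fact (d+e) / fact d * fact (d+e) / fact d) / c ^ (2*d+1) * (t^(j+d)/c)
   = (-1)^e * real ((e+d) choose d) * t^(e+d) * ((1/(c*c))^(d+1) * (real ((j+d) choose d) * (t*t)^j))"
        by (rule term_alg[OF c0])
      then show ?thesis
        unfolding nd pd by (simp add: tv t_def c_def mult_2 add.commute add.left_commute)
    qed
  qed simp
  also have "\<dots> = (\<Sum>d\<le>n. (if d \<le> p then ?T d else 0))"
    by (rule sum_rev_atMost[where h="\<lambda>d. if d \<le> p then ?T d else 0"])
  also have "\<dots> = (\<Sum>d\<le>n. (if d \<in> {..p} then ?T d else 0))"
    by simp
  also have "\<dots> = (\<Sum>d\<in>{..n} \<inter> {..p}. ?T d)"
    by (subst sum.inter_restrict) auto
  also have "\<dots> = (\<Sum>d\<le>p. ?T d)"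
    by (rule sum.mono_neutral_left) auto
  finally show ?thesis .
qed



lemma diag_zero:
  assumes "NS > 0" "p > 0"
  shows "infsum (\<lambda>n. tms_elem (1 + NS) p p n n * tmsv_amp NS n) UNIV = 0"
proof -
  define t where "t = sqrt NS / sqrt (1 + NS)"
  define c where "c = sqrt (1 + NS)"
  have cc: "c * c = 1 + NS" using assms by (simp add: c_def)
  have tt: "t * t = NS / (1 + NS)" using assms by (simp add: t_def real_sqrt_divide[symmetric])
  have tt0: "0 \<le> t * t" "t * t < 1" using assms by (auto simp: tt)
  have one: "(1 / (c * c)) ^ (d + 1) * (1 / (1 - t * t)) ^ (d + 1) = 1" for d
  proof -
    have "(1 / (c * c)) * (1 / (1 - t * t)) = 1" using assms by (simp add: cc tt field_simps)
    then show ?thesis by (metis power_mult_distrib power_one)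
  qed
  have hs: "((\<lambda>n. \<Sum>d\<le>p. (-1)^(p-d) * real (p choose d) * t^p * ((1/(c*c))^(d+1) * (real (n choose d) * (t*t)^(n-d))))
        has_sum (\<Sum>d\<le>p. (-1)^(p-d) * real (p choose d) * t^p)) UNIV"
  proof (rule has_sum_sum_fin)
    fix d assume "d \<in> {..p}"
    have "((\<lambda>n. real (n choose d) * (t*t)^(n-d)) has_sum (1 / (1 - t*t)) ^ (d + 1)) UNIV"
      by (rule negbin) (use tt0 in auto)
    then have "((\<lambda>n. (-1)^(p-d) * real (p choose d) * t^p * ((1/(c*c))^(d+1) * (real (n choose d) * (t*t)^(n-d))))
        has_sum ((-1)^(p-d) * real (p choose d) * t^p * ((1/(c*c))^(d+1) * (1 / (1 - t*t)) ^ (d + 1)))) UNIV"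
      by (intro has_sum_cmult_right)
    then show "((\<lambda>n. (-1)^(p-d) * real (p choose d) * t^p * ((1/(c*c))^(d+1) * (real (n choose d) * (t*t)^(n-d))))
        has_sum ((-1)^(p-d) * real (p choose d) * t^p)) UNIV"
      unfolding one by simp
  qed simp
  have "(\<Sum>d\<le>p. (-1)^(p-d) * real (p choose d) * t^p) = t^p * (\<Sum>d\<le>p. real (p choose d) * 1 ^ d * (-1)^(p-d))"
    by (simp add: sum_distrib_left mult_ac)
  also have "\<dots> = t^p * (1 + (-1)) ^ p"
    by (simp only: binomial_ring)
  also have "\<dots> = 0" using assms by simp
  finally have "((\<lambda>n. tms_elem (1 + NS) p p n n * tmsv_amp NS n) has_sum 0) UNIV"
    using hs by (simp add: tms_diag[OF assms(1)] t_def c_def)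
  then show ?thesis by (rule infsumI)
qed

lemma out_amp1:
  assumes "NS > 0"
  shows "out_amp NS 1 p q e = (if p = 0 \<and> q = 0 \<and> e = 0 then 1 else 0)"
proof (cases "p = 0 \<and> q = 0")
  case True
  then show ?thesis using out_amp00[OF assms, of 1] by simp
next
  case False
  have "out_amp NS 1 p q e = infsum (\<lambda>n. tms_elem (1 + NS) p q n n * tmsv_amp NS n * loss_amp 1 n n e) UNIV"
    unfolding out_amp_def by (subst diag_infsum) (auto simp: loss1)
  also have "\<dots> = 0"
  proof (cases "e = 0 \<and> p = q")
    case True
    with False have "p > 0" by auto
    then show ?thesis using True diag_zero[OF assms] by (simp add: loss1)
  next
    case False
    then show ?thesis by (auto simp: loss1 tms_offdiag)
  qed
  finally show ?thesis using False by auto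
qed

lemma pair_prob1:
  assumes "NS > 0"
  shows "pair_prob NS 1 pq = (if pq = (0, 0) then 1 else 0)"
proof (cases "pq = (0, 0)")
  case True
  have "pair_prob NS 1 pq = (\<Sum>\<^sub>\<infinity>e\<in>UNIV. (if (e::nat) = 0 then 1 else 0 :: real))"
    unfolding pair_prob_def using True by (intro infsum_cong) (simp add: out_amp1[OF assms])
  also have "\<dots> = 1" by (subst single_infsum[where a=0]) auto
  finally show ?thesis using True by simp
next
  case False
  then show ?thesis unfolding pair_prob_def
    by (cases pq) (auto simp: out_amp1[OF assms])
qed

lemma pair_prob00:
  assumes "NS > 0" "0 \<le> \<kappa>" "\<kappa> \<le> 1"
  shows "pair_prob NS \<kappa> (0, 0) = (1 / (1 + NS * (1 - sqrt \<kappa>))) ^ 2"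
proof -
  have "pair_prob NS \<kappa> (0, 0) = (\<Sum>\<^sub>\<infinity>e\<in>UNIV. (if (e::nat) = 0 then (1 / (1 + NS * (1 - sqrt \<kappa>))) ^ 2 else 0))"
    unfolding pair_prob_def by (intro infsum_cong) (simp add: out_amp00[OF assms])
  also have "\<dots> = (1 / (1 + NS * (1 - sqrt \<kappa>))) ^ 2" by (subst single_infsum[where a=0]) auto
  finally show ?thesis .
qed

lemma pair_prob_nonneg: "pair_prob NS \<kappa> pq \<ge> 0"
  unfolding pair_prob_def by (rule infsum_nonneg) simp



lemma hyp_w0:
  assumes "NS > 0" "0 \<le> \<kappa>T" "\<kappa>T \<le> 1"
  shows "hyp_prob NS \<kappa>T m M h (\<lambda>l r. (0, 0)) =
     (if h < m then ((1 / (1 + NS * (1 - sqrt \<kappa>T))) ^ 2) ^ M else 1)"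
proof -
  have f: "pair_prob NS (kap \<kappa>T h l) (0, 0) = (if l = h then (1 / (1 + NS * (1 - sqrt \<kappa>T))) ^ 2 else 1)" for l
    using assms by (simp add: kap_def pair_prob00 pair_prob1)
  have "hyp_prob NS \<kappa>T m M h (\<lambda>l r. (0, 0)) = (\<Prod>l<m. (if l = h then ((1 / (1 + NS * (1 - sqrt \<kappa>T))) ^ 2) ^ M else 1))"
    unfolding hyp_prob_def f by (intro prod.cong) auto
  also have "\<dots> = (if h < m then ((1 / (1 + NS * (1 - sqrt \<kappa>T))) ^ 2) ^ M else 1)"
    by (subst prod.delta) auto
  finally show ?thesis .
qed

lemma hyp_nonneg: "hyp_prob NS \<kappa>T m M h w \<ge> 0"
  unfolding hyp_prob_def by (intro prod_nonneg) (auto intro: pair_prob_nonneg)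

lemma hyp_other_zero:
  assumes "NS > 0" "w \<in> outcomes m M" "w \<noteq> (\<lambda>l r. (0, 0))"
    and "hyp_prob NS \<kappa>T m M h w > 0" "h' \<noteq> h"
  shows "hyp_prob NS \<kappa>T m M h' w = 0"
proof -
  have "\<exists>l r. l < m \<and> r < M \<and> w l r \<noteq> (0, 0)"
  proof (rule ccontr)
    assume a: "\<not> ?thesis"
    have "w = (\<lambda>l r. (0, 0))"
    proof (intro ext)
      fix l r
      show "w l r = (0, 0)"
      proof (cases "l < m \<and> r < M")
        case True then show ?thesis using a by blast
      next
        case False then show ?thesis using assms(2) unfolding outcomes_def by auto
      qed
    qed
    then show False using assms(3) by contradiction
  qed
  then obtain l r where lr: "l < m" "r < M" "w l r \<noteq> (0, 0)" by blast
  have "hyp_prob NS \<kappa>T m M h w \<noteq> 0" using assms(4) by simp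
  then have "pair_prob NS (kap \<kappa>T h l) (w l r) \<noteq> 0"
    using lr(1,2) unfolding hyp_prob_def by (simp add: prod_zero_iff)
  then have "kap \<kappa>T h l \<noteq> 1" using lr(3) pair_prob1[OF assms(1), of "w l r"] by auto
  then have "l = h" by (auto simp: kap_def split: if_splits)
  then have "kap \<kappa>T h' l = 1" using assms(5) by (simp add: kap_def)
  then have z: "pair_prob NS (kap \<kappa>T h' l) (w l r) = 0" using lr(3) pair_prob1[OF assms(1), of "w l r"] by auto
  have "(\<Prod>r<M. pair_prob NS (kap \<kappa>T h' l) (w l r)) = 0"
    unfolding prod_zero_iff[OF finite_lessThan] using z lr(2) by auto
  then show ?thesis
    unfolding hyp_prob_def prod_zero_iff[OF finite_lessThan] using lr(1) by auto
qed

lemma summand_zero: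
  assumes "NS > 0" "w \<in> outcomes m M" "w \<noteq> (\<lambda>l r. (0, 0))" "h < num_hyp m"
  shows "hyp_prob NS \<kappa>T m M h w * (1 - decide_prob NS \<kappa>T m M w h) = 0"
proof (cases "hyp_prob NS \<kappa>T m M h w > 0")
  case False
  then show ?thesis using hyp_nonneg[of NS \<kappa>T m M h w] by simp
next
  case True
  have oz: "h' \<noteq> h \<Longrightarrow> hyp_prob NS \<kappa>T m M h' w = 0" for h'
    using hyp_other_zero[OF assms(1-3) True] by blast
  have "ml_set NS \<kappa>T m M w = {h}"
  proof
    show "{h} \<subseteq> ml_set NS \<kappa>T m M w"
      unfolding ml_set_def using assms(4) True oz by force
    show "ml_set NS \<kappa>T m M w \<subseteq> {h}"
    proof
      fix x assume x: "x \<in> ml_set NS \<kappa>T m M w"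
      show "x \<in> {h}"
      proof (rule ccontr)
        assume "x \<notin> {h}"
        then have "hyp_prob NS \<kappa>T m M x w = 0" using oz by auto
        moreover have "hyp_prob NS \<kappa>T m M h w \<le> hyp_prob NS \<kappa>T m M x w"
          using x assms(4) unfolding ml_set_def by auto
        ultimately show False using True by simp
      qed
    qed
  qed
  then show ?thesis by (simp add: decide_prob_def)
qed



theorem mainTheorem1:
  fixes NS \<kappa>T :: real and m M :: nat
  assumes "NS > 0" and "M \<ge> 1" and "m \<ge> 1" and "0 \<le> \<kappa>T" and "\<kappa>T \<le> 1"
  shows "error_prob NS \<kappa>T m M =
           (if m = 1 then 1 / 2 else (real m - 1) / real m)
           * (1 / (1 + NS * (1 - sqrt \<kappa>T))) ^ (2 * M)"
proof -
  define w0 :: "nat \<Rightarrow> nat \<Rightarrow> nat \<times> nat" where "w0 = (\<lambda>l r. (0, 0))"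
  define Q where "Q = ((1 / (1 + NS * (1 - sqrt \<kappa>T))) ^ 2) ^ M"
  have rhsQ: "(1 / (1 + NS * (1 - sqrt \<kappa>T))) ^ (2 * M) = Q"
    by (simp add: Q_def power_mult)
  have "sqrt \<kappa>T \<le> 1" using assms by simp
  then have den: "1 \<le> 1 + NS * (1 - sqrt \<kappa>T)" using assms by simp
  then have Q1: "Q \<le> 1" "0 < Q" unfolding Q_def
    by (auto intro!: power_le_one simp: power_one_over)
  have w0o: "w0 \<in> outcomes m M" by (simp add: w0_def outcomes_def)
  have HP: "hyp_prob NS \<kappa>T m M h w0 = (if h < m then Q else 1)" for h
    unfolding w0_def Q_def using hyp_w0[OF assms(1,4,5)] by simp
  have inner: "(\<Sum>\<^sub>\<infinity>w\<in>outcomes m M. hyp_prob NS \<kappa>T m M h w * (1 - decide_prob NS \<kappa>T m M w h))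
      = hyp_prob NS \<kappa>T m M h w0 * (1 - decide_prob NS \<kappa>T m M w0 h)" if "h < num_hyp m" for h
    by (rule single_infsum[OF _ w0o]) (use summand_zero[OF assms(1) _ _ that] w0_def in auto)
  have E: "error_prob NS \<kappa>T m M = (\<Sum>h<num_hyp m. (1 / real (num_hyp m)) *
        (hyp_prob NS \<kappa>T m M h w0 * (1 - decide_prob NS \<kappa>T m M w0 h)))"
    unfolding error_prob_def by (intro sum.cong) (auto simp: inner)
  show ?thesis
  proof (cases "m = 1")
    case True
    have nh: "num_hyp m = 2" using True by (simp add: num_hyp_def)
    have h0: "hyp_prob NS \<kappa>T m M 0 w0 = Q" "hyp_prob NS \<kappa>T m M 1 w0 = 1"
      using HP[of 0] HP[of 1] True by simp_all
    have E2: "error_prob NS \<kappa>T m M = 1/2 * (Q * (1 - decide_prob NS \<kappa>T m M w0 0)) + 1/2 * (1 - decide_prob NS \<kappa>T m M w0 1)"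
      unfolding E nh by (simp add: numeral_2_eq_2 h0[simplified])
    show ?thesis
    proof (cases "Q < 1")
      case True2: True
      have "ml_set NS \<kappa>T m M w0 = {1}"
        unfolding ml_set_def nh using True2 by (auto simp: h0[simplified] less_2_cases_iff)
      then show ?thesis unfolding E2 using True by (simp add: decide_prob_def rhsQ)
    next
      case False
      then have "Q = 1" using Q1 by simp
      then have "ml_set NS \<kappa>T m M w0 = {0, 1}"
        unfolding ml_set_def nh using \<open>Q = 1\<close> by (auto simp: h0[simplified] less_2_cases_iff)
      then show ?thesis unfolding E2 using True \<open>Q = 1\<close> by (simp add: decide_prob_def rhsQ)
    qed
  next
    case False
    then have m2: "m \<ge> 2" using assms(3) by simp
    have nh: "num_hyp m = m" using False by (simp add: num_hyp_def)
    have ml: "ml_set NS \<kappa>T m M w0 = {..<m}"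
      unfolding ml_set_def nh by (auto simp: HP)
    have "error_prob NS \<kappa>T m M = (\<Sum>h<m. (1 / real m) * (Q * (1 - 1 / real m)))"
      unfolding E nh by (intro sum.cong) (auto simp: HP decide_prob_def ml)
    also have "\<dots> = Q * (1 - 1 / real m)" using m2 by simp
    also have "\<dots> = (real m - 1) / real m * Q" using m2 by (simp add: field_simps)
    finally show ?thesis using False by (simp add: rhsQ)
  qed
qed

end
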